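(* Let $\Lambda$ be a finite simple graph with vertex set $\{v_1,\dots,v_n\}$, $n\ge 3$, and let $\Gamma'=\Gamma'(\Lambda)$ be the graph constructed as follows. The vertex set of $\Gamma'$ is $\{v_1,\dots,v_n\}\cup\{a_1,a_2,a_3,b_1,b_2,b_3,c_1,\dots,c_n,d_1,d_2,d_3\}$ (all new vertices distinct). The edges of $\Gamma'$ are: all edges of $\Lambda$; $\{c_j,v_j\}$ and $\{c_j,v_{j+1}\}$ for $1\le j\le n$, where $v_{n+1}:=v_1$; $\{d_i,c_j\}$ for all $i\in\{1,2,3\}$ and $1\le j\le n$; $\{d_1,v_1\}$, $\{d_1,b_1\}$; $\{d_2,v_2\}$; $\{d_3,v_k\}$ for $3\le k\le n$, and $\{d_3,b_3\}$; $\{d_2,d_3\}$; $\{v_k,b_i\}$ for all $1\le k\le n$ and $i\in\{1,2,3\}$; $\{b_1,a_1\}$, $\{b_2,a_2\}$, $\{b_3,a_3\}$; and $\{a_1,a_2\}$, $\{a_1,a_3\}$, $\{a_2,a_3\}$. There are no other edges. Then the only graph automorphism of $\Gamma'$ is the identity.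
   Context: All graphs are finite, undirected, without loops or multiple edges. A graph automorphism is a bijection of the vertex set preserving adjacency and non-adjacency. *)

theory Defs
  imports Main
begin

text \<open>Vertices of Gamma': V k = v_k, A i = a_i, B i = b_i, C j = c_j, D i = d_i
  (indices start at 1).\<close>
datatype gv = V nat | A nat | B nat | C nat | D nat

definition gamma_verts :: "nat \<Rightarrow> gv set" where
  "gamma_verts n = V ` {1..n} \<union> A ` {1..3} \<union> B ` {1..3} \<union> C ` {1..n} \<union> D ` {1..3}"

definition base_edge :: "nat \<Rightarrow> (nat \<Rightarrow> nat \<Rightarrow> bool) \<Rightarrow> gv \<Rightarrow> gv \<Rightarrow> bool" where
  "base_edge n E x y \<longleftrightarrow>
     (\<exists>i j. x = V i \<and> y = V j \<and> i \<in> {1..n} \<and> j \<in> {1..n} \<and> E i j)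
   \<or> (\<exists>j. j \<in> {1..n} \<and> x = C j \<and> (y = V j \<or> y = V (if j = n then 1 else j + 1)))
   \<or> (\<exists>i j. i \<in> {1..3} \<and> j \<in> {1..n} \<and> x = D i \<and> y = C j)
   \<or> (x = D 1 \<and> y = V 1) \<or> (x = D 1 \<and> y = B 1)
   \<or> (x = D 2 \<and> y = V 2)
   \<or> (\<exists>k. 3 \<le> k \<and> k \<le> n \<and> x = D 3 \<and> y = V k) \<or> (x = D 3 \<and> y = B 3)
   \<or> (x = D 2 \<and> y = D 3)
   \<or> (\<exists>k i. k \<in> {1..n} \<and> i \<in> {1..3} \<and> x = V k \<and> y = B i)
   \<or> (\<exists>i. i \<in> {1..3} \<and> x = B i \<and> y = A i)
   \<or> (\<exists>i j. i \<in> {1..3} \<and> j \<in> {1..3} \<and> i \<noteq> j \<and> x = A i \<and> y = A j)"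

definition gamma_adj :: "nat \<Rightarrow> (nat \<Rightarrow> nat \<Rightarrow> bool) \<Rightarrow> gv \<Rightarrow> gv \<Rightarrow> bool" where
  "gamma_adj n E x y \<longleftrightarrow> base_edge n E x y \<or> base_edge n E y x"

definition graph_automorphism :: "'a set \<Rightarrow> ('a \<Rightarrow> 'a \<Rightarrow> bool) \<Rightarrow> ('a \<Rightarrow> 'a) \<Rightarrow> bool" where
  "graph_automorphism Vs adj f \<longleftrightarrow> bij_betw f Vs Vs \<and>
     (\<forall>x\<in>Vs. \<forall>y\<in>Vs. adj (f x) (f y) \<longleftrightarrow> adj x y)"

end

theory Submission
  imports Defs
begin

lemma adjs[simp]:
  "gamma_adj n E (V i) (V j) \<longleftrightarrow> i \<in> {1..n} \<and> j \<in> {1..n} \<and> (E i j \<or> E j i)"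
  "gamma_adj n E (V k) (C j) \<longleftrightarrow> j \<in> {1..n} \<and> (k = j \<or> k = (if j = n then 1 else j+1))"
  "gamma_adj n E (C j) (V k) \<longleftrightarrow> j \<in> {1..n} \<and> (k = j \<or> k = (if j = n then 1 else j+1))"
  "gamma_adj n E (V k) (D i) \<longleftrightarrow> (i = 1 \<and> k = 1) \<or> (i = 2 \<and> k = 2) \<or> (i = 3 \<and> 3 \<le> k \<and> k \<le> n)"
  "gamma_adj n E (D i) (V k) \<longleftrightarrow> (i = 1 \<and> k = 1) \<or> (i = 2 \<and> k = 2) \<or> (i = 3 \<and> 3 \<le> k \<and> k \<le> n)"
  "gamma_adj n E (V k) (B i) \<longleftrightarrow> k \<in> {1..n} \<and> i \<in> {1..3}"
  "gamma_adj n E (B i) (V k) \<longleftrightarrow> k \<in> {1..n} \<and> i \<in> {1..3}"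
  "\<not> gamma_adj n E (V k) (A i)" "\<not> gamma_adj n E (A i) (V k)"
  "\<not> gamma_adj n E (C k) (C i)"
  "gamma_adj n E (C j) (D i) \<longleftrightarrow> i \<in> {1..3} \<and> j \<in> {1..n}"
  "gamma_adj n E (D i) (C j) \<longleftrightarrow> i \<in> {1..3} \<and> j \<in> {1..n}"
  "\<not> gamma_adj n E (C k) (B i)" "\<not> gamma_adj n E (B i) (C k)"
  "\<not> gamma_adj n E (C k) (A i)" "\<not> gamma_adj n E (A i) (C k)"
  "gamma_adj n E (D i) (D j) \<longleftrightarrow> (i = 2 \<and> j = 3) \<or> (i = 3 \<and> j = 2)"
  "gamma_adj n E (D i) (B j) \<longleftrightarrow> (i = 1 \<and> j = 1) \<or> (i = 3 \<and> j = 3)"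
  "gamma_adj n E (B j) (D i) \<longleftrightarrow> (i = 1 \<and> j = 1) \<or> (i = 3 \<and> j = 3)"
  "\<not> gamma_adj n E (D k) (A i)" "\<not> gamma_adj n E (A i) (D k)"
  "\<not> gamma_adj n E (B k) (B i)"
  "gamma_adj n E (B i) (A j) \<longleftrightarrow> i = j \<and> i \<in> {1..3}"
  "gamma_adj n E (A j) (B i) \<longleftrightarrow> i = j \<and> i \<in> {1..3}"
  "gamma_adj n E (A i) (A j) \<longleftrightarrow> i \<in> {1..3} \<and> j \<in> {1..3} \<and> i \<noteq> j"
  by (auto simp: gamma_adj_def base_edge_def)

lemma mems[simp]:
  "V k \<in> gamma_verts n \<longleftrightarrow> k \<in> {1..n}"
  "C k \<in> gamma_verts n \<longleftrightarrow> k \<in> {1..n}"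
  "A k \<in> gamma_verts n \<longleftrightarrow> k \<in> {1..3}"
  "B k \<in> gamma_verts n \<longleftrightarrow> k \<in> {1..3}"
  "D k \<in> gamma_verts n \<longleftrightarrow> k \<in> {1..3}"
  by (auto simp: gamma_verts_def)

lemma fin[simp]: "finite (gamma_verts n)"
  by (simp add: gamma_verts_def)

lemma inv_aut:
  assumes "graph_automorphism Vs adj f"
  shows "graph_automorphism Vs adj (inv_into Vs f)"
proof -
  have b: "bij_betw f Vs Vs" and a: "\<forall>x\<in>Vs. \<forall>y\<in>Vs. adj (f x) (f y) \<longleftrightarrow> adj x y"
    using assms by (auto simp: graph_automorphism_def)
  have bi: "bij_betw (inv_into Vs f) Vs Vs" using b by (rule bij_betw_inv_into)
  show ?thesis unfolding graph_automorphism_def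
  proof (intro conjI ballI bi)
    fix x y assume x: "x \<in> Vs" and y: "y \<in> Vs"
    have fx: "f (inv_into Vs f x) = x" using b x by (simp add: bij_betw_inv_into_right)
    have fy: "f (inv_into Vs f y) = y" using b y by (simp add: bij_betw_inv_into_right)
    have "inv_into Vs f x \<in> Vs" "inv_into Vs f y \<in> Vs" using bi x y bij_betwE by blast+
    then show "adj (inv_into Vs f x) (inv_into Vs f y) = adj x y"
      using a fx fy by metis
  qed
qed

definition deg :: "nat \<Rightarrow> (nat \<Rightarrow> nat \<Rightarrow> bool) \<Rightarrow> gv \<Rightarrow> nat" where
  "deg n E x = card {y \<in> gamma_verts n. gamma_adj n E x y}"

lemma deg_A: assumes "i \<in> {1..3::nat}" shows "deg n E (A i) = 3"
proof -
  from assms have "i = 1 \<or> i = 2 \<or> i = 3" by auto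
  then have "{y \<in> gamma_verts n. gamma_adj n E (A i) y} = {B i, A (if i = 1 then 2 else 1), A (if i = 3 then 2 else 3)}"
    apply (elim disjE)
      apply (auto)
    apply (case_tac x; auto)+
    done
  then show ?thesis using assms by (auto simp: deg_def)
qed

lemma deg_ge4:
  assumes "n \<ge> 3" "x \<in> gamma_verts n" "x \<notin> A ` {1..3}"
  shows "deg n E x \<ge> 4"
proof -
  have "\<exists>S. S \<subseteq> {y \<in> gamma_verts n. gamma_adj n E x y} \<and> card S = 4"
  proof (cases x)
    case (V k)
    then show ?thesis using assms
      by (intro exI[of _ "{B 1, B 2, B 3, C k}"]) auto
  next
    case (A k)
    then show ?thesis using assms by auto
  next
    case (B k)
    then show ?thesis using assms
      by (intro exI[of _ "{V 1, V 2, V 3, A k}"]) auto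
  next
    case (C k)
    then show ?thesis using assms
      by (intro exI[of _ "{V k, D 1, D 2, D 3}"]) auto
  next
    case (D k)
    then have "k = 1 \<or> k = 2 \<or> k = 3" using assms by auto
    then show ?thesis using assms D
      apply (elim disjE)
      apply (rule exI[of _ "{C 1, C 2, C 3, V 1}"]; simp)
      apply (rule exI[of _ "{C 1, C 2, C 3, V 2}"]; simp)
      apply (rule exI[of _ "{C 1, C 2, C 3, B 3}"]; simp)
      done
  qed
  then obtain S where "S \<subseteq> {y \<in> gamma_verts n. gamma_adj n E x y}" "card S = 4" by blast
  then show ?thesis unfolding deg_def
    by (metis (no_types, lifting) card_mono fin finite_subset mem_Collect_eq subsetI)
qed

locale autg =
  fixes n :: nat and E :: "nat \<Rightarrow> nat \<Rightarrow> bool" and g :: "gv \<Rightarrow> gv"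
  assumes n3: "n \<ge> 3"
    and aut: "graph_automorphism (gamma_verts n) (gamma_adj n E) g"
begin

lemma bij: "bij_betw g (gamma_verts n) (gamma_verts n)"
  using aut by (simp add: graph_automorphism_def)

lemma inj: "inj_on g (gamma_verts n)" using bij bij_betw_def by blast

lemma gin: "x \<in> gamma_verts n \<Longrightarrow> g x \<in> gamma_verts n"
  using bij bij_betwE by blast

lemma adjg: "x \<in> gamma_verts n \<Longrightarrow> y \<in> gamma_verts n \<Longrightarrow> gamma_adj n E (g x) (g y) \<longleftrightarrow> gamma_adj n E x y"
  using aut by (simp add: graph_automorphism_def)

lemma surj: "y \<in> gamma_verts n \<Longrightarrow> \<exists>x \<in> gamma_verts n. y = g x"
  using bij by (metis bij_betw_def imageE)

lemma injeq: "x \<in> gamma_verts n \<Longrightarrow> y \<in> gamma_verts n \<Longrightarrow> g x = g y \<longleftrightarrow> x = y"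
  using inj by (meson inj_on_eq_iff)

lemma inv_autg: "autg n E (inv_into (gamma_verts n) g)"
  using inv_aut[OF aut] n3 by (simp add: autg_def)

lemma ginv: "x \<in> gamma_verts n \<Longrightarrow> inv_into (gamma_verts n) g (g x) = x"
  using inj by simp

lemma deg_pres: assumes "x \<in> gamma_verts n" shows "deg n E (g x) = deg n E x"
proof -
  have "{y \<in> gamma_verts n. gamma_adj n E (g x) y} = g ` {y \<in> gamma_verts n. gamma_adj n E x y}"
  proof (rule set_eqI, rule iffI)
    fix y assume "y \<in> {y \<in> gamma_verts n. gamma_adj n E (g x) y}"
    then obtain z where "z \<in> gamma_verts n" "y = g z" "gamma_adj n E (g x) (g z)" using surj by blast
    then show "y \<in> g ` {y \<in> gamma_verts n. gamma_adj n E x y}" using adjg assms by auto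
  next
    fix y assume "y \<in> g ` {y \<in> gamma_verts n. gamma_adj n E x y}"
    then show "y \<in> {y \<in> gamma_verts n. gamma_adj n E (g x) y}" using adjg assms gin by auto
  qed
  moreover have "inj_on g {y \<in> gamma_verts n. gamma_adj n E x y}" using inj inj_on_subset by fastforce
  ultimately show ?thesis unfolding deg_def by (simp add: card_image)
qed

lemma A_fwd: "x \<in> A ` {1..3} \<Longrightarrow> g x \<in> A ` {1..3}"
proof -
  assume x: "x \<in> A ` {1..3}"
  then have xv: "x \<in> gamma_verts n" by auto
  have "deg n E (g x) = 3" using deg_pres[OF xv] x deg_A by auto
  show ?thesis
  proof (rule ccontr)
    assume "g x \<notin> A ` {1..3}"
    then have "4 \<le> deg n E (g x)" by (rule deg_ge4[OF n3 gin[OF xv]])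
    with \<open>deg n E (g x) = 3\<close> show False by simp
  qed
qed

end

lemma A_iff: assumes "autg n E g" "x \<in> gamma_verts n"
  shows "g x \<in> A ` {1..3} \<longleftrightarrow> x \<in> A ` {1..3}"
  using autg.A_fwd[OF assms(1)] autg.A_fwd[OF autg.inv_autg[OF assms(1)]] autg.ginv[OF assms(1) assms(2)]
  by metis

context autg begin

lemma B_fwd: "x \<in> B ` {1..3} \<Longrightarrow> g x \<in> B ` {1..3}"
proof -
  assume x: "x \<in> B ` {1..3}"
  then obtain i where i: "i \<in> {1..3}" "x = B i" by auto
  have "gamma_adj n E (g x) (g (A i))" using adjg i by simp
  moreover have "g (A i) \<in> A ` {1..3}" using A_fwd i by auto
  moreover have "g x \<notin> A ` {1..3}" using A_iff[OF autg_axioms, of x] i by (auto simp: image_iff)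
  moreover have "g x \<in> gamma_verts n" using gin i by simp
  ultimately show ?thesis by (cases "g x") auto
qed

end

lemma B_iff: assumes "autg n E g" "x \<in> gamma_verts n"
  shows "g x \<in> B ` {1..3} \<longleftrightarrow> x \<in> B ` {1..3}"
  using autg.B_fwd[OF assms(1)] autg.B_fwd[OF autg.inv_autg[OF assms(1)]] autg.ginv[OF assms(1) assms(2)]
  by metis

context autg begin

lemma V_fwd: "x \<in> V ` {1..n} \<Longrightarrow> g x \<in> V ` {1..n}"
proof -
  assume x: "x \<in> V ` {1..n}"
  then have xv: "x \<in> gamma_verts n" by auto
  obtain i where i: "g (B 1) = B i" "i \<in> {1..3}" using B_fwd[of "B 1"] by auto
  obtain j where j: "g (B 2) = B j" "j \<in> {1..3}" using B_fwd[of "B 2"] by auto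
  have ij: "i \<noteq> j" using injeq[of "B 1" "B 2"] i j by auto
  have "gamma_adj n E (g x) (B i)" "gamma_adj n E (g x) (B j)"
    using adjg[OF xv, of "B 1"] adjg[OF xv, of "B 2"] i j x by auto
  then show ?thesis using ij gin[OF xv] by (cases "g x") auto
qed

end

lemma V_iff: assumes "autg n E g" "x \<in> gamma_verts n"
  shows "g x \<in> V ` {1..n} \<longleftrightarrow> x \<in> V ` {1..n}"
  using autg.V_fwd[OF assms(1)] autg.V_fwd[OF autg.inv_autg[OF assms(1)]] autg.ginv[OF assms(1) assms(2)]
  by metis

context autg begin

lemma Vi: "x \<in> gamma_verts n \<Longrightarrow> g x \<in> V ` {1..n} \<longleftrightarrow> x \<in> V ` {1..n}"
  using V_iff[OF autg_axioms] .
lemma Ai: "x \<in> gamma_verts n \<Longrightarrow> g x \<in> A ` {1..3} \<longleftrightarrow> x \<in> A ` {1..3}"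
  using A_iff[OF autg_axioms] .
lemma Bi: "x \<in> gamma_verts n \<Longrightarrow> g x \<in> B ` {1..3} \<longleftrightarrow> x \<in> B ` {1..3}"
  using B_iff[OF autg_axioms] .

lemma fixB2: "g (B 2) = B 2"
proof (rule ccontr)
  assume ne: "g (B 2) \<noteq> B 2"
  obtain i where i: "g (B 2) = B i" "i \<in> {1..3}" using B_fwd[of "B 2"] by auto
  with ne have i13: "i = 1 \<or> i = 3" by auto
  then have "D i \<in> gamma_verts n" by auto
  then obtain y where y: "y \<in> gamma_verts n" "D i = g y" using surj by blast
  have "gamma_adj n E (g y) (g (B 2))" using y(2)[symmetric] i i13 by auto
  then have "gamma_adj n E y (B 2)" using adjg y by simp
  then have "y \<in> V ` {1..n} \<or> y \<in> A ` {1..3}" using y by (cases y) auto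
  then show False using Vi[OF y(1)] Ai[OF y(1)] y(2)[symmetric] by (auto simp: image_iff)
qed

lemma fixA_from_B: assumes "i \<in> {1..3}" "g (B i) = B i" shows "g (A i) = A i"
proof -
  have "g (A i) \<in> A ` {1..3}" using A_fwd assms by auto
  moreover have "gamma_adj n E (g (A i)) (g (B i))" using adjg[of "A i" "B i"] assms(1) by simp
  ultimately show ?thesis using assms by auto
qed

lemma fixB1: "g (B 1) = B 1"
proof (rule ccontr)
  assume ne: "g (B 1) \<noteq> B 1"
  obtain i where i: "g (B 1) = B i" "i \<in> {1..3}" using B_fwd[of "B 1"] by auto
  have "i \<noteq> 2" using injeq[of "B 1" "B 2"] fixB2 i by auto
  with ne i have i3: "g (B 1) = B 3" by auto
  have d1: "D 1 \<in> gamma_verts n" by simp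
  have "gamma_adj n E (g (D 1)) (B 3)" using adjg[OF d1, of "B 1"] i3 by simp
  moreover have "g (D 1) \<notin> V ` {1..n}" "g (D 1) \<notin> A ` {1..3}"
    using Vi[OF d1] Ai[OF d1] by auto
  moreover have "g (D 1) \<in> gamma_verts n" using gin d1 .
  ultimately have gd1: "g (D 1) = D 3" by (cases "g (D 1)") auto
  have "D 2 \<in> gamma_verts n" by simp
  then obtain y where y: "y \<in> gamma_verts n" "D 2 = g y" using surj by blast
  have "C 1 \<in> gamma_verts n" using n3 by simp
  then obtain z where z: "z \<in> gamma_verts n" "C 1 = g z" using surj by blast
  have "gamma_adj n E (g y) (g (D 1))" using y(2)[symmetric] gd1 by simp
  then have ay: "gamma_adj n E y (D 1)" using adjg y d1 by simp
  have "gamma_adj n E (g z) (g (D 1))" using z(2)[symmetric] gd1 n3 by simp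
  then have az: "gamma_adj n E z (D 1)" using adjg z d1 by simp
  have "gamma_adj n E (g y) (g z)" using y(2)[symmetric] z(2)[symmetric] n3 by simp
  then have ayz: "gamma_adj n E y z" using adjg y z by simp
  have yn: "y \<notin> V ` {1..n}" "y \<notin> B ` {1..3}"
    using Vi[OF y(1)] Bi[OF y(1)] y(2)[symmetric] by (auto simp: image_iff)
  have zn: "z \<notin> V ` {1..n}" "z \<notin> B ` {1..3}"
    using Vi[OF z(1)] Bi[OF z(1)] z(2)[symmetric] by (auto simp: image_iff)
  have "\<exists>j. y = C j" using ay yn y(1) by (cases y) auto
  moreover have "\<exists>j. z = C j" using az zn z(1) by (cases z) auto
  ultimately show False using ayz by auto
qed

lemma fixB3: "g (B 3) = B 3"
proof -
  obtain i where i: "g (B 3) = B i" "i \<in> {1..3}" using B_fwd[of "B 3"] by auto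
  have "i \<noteq> 2" using injeq[of "B 3" "B 2"] fixB2 i by auto
  moreover have "i \<noteq> 1" using injeq[of "B 3" "B 1"] fixB1 i by auto
  ultimately show ?thesis using i by auto
qed

lemma fixD_from_B: assumes "i = 1 \<or> i = 3" shows "g (D i) = D i"
proof -
  have d: "D i \<in> gamma_verts n" using assms by auto
  have "g (B i) = B i" using assms fixB1 fixB3 by auto
  then have "gamma_adj n E (g (D i)) (B i)" using adjg[OF d, of "B i"] assms by auto
  moreover have "g (D i) \<notin> V ` {1..n}" "g (D i) \<notin> A ` {1..3}"
    using Vi[OF d] Ai[OF d] by auto
  moreover have "g (D i) \<in> gamma_verts n" using gin d .
  ultimately show ?thesis using assms by (cases "g (D i)") auto
qed

lemma fixD2: "g (D 2) = D 2"
proof -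
  have d: "D 2 \<in> gamma_verts n" by simp
  have "gamma_adj n E (g (D 2)) (D 3)" using adjg[OF d, of "D 3"] fixD_from_B[of 3] by auto
  moreover have "\<not> gamma_adj n E (g (D 2)) (D 1)" using adjg[OF d, of "D 1"] fixD_from_B[of 1] by auto
  moreover have "g (D 2) \<notin> V ` {1..n}" "g (D 2) \<notin> B ` {1..3}"
    using Vi[OF d] Bi[OF d] by auto
  moreover have "g (D 2) \<in> gamma_verts n" using gin d .
  ultimately show ?thesis by (cases "g (D 2)") auto
qed

lemma fixV12: "g (V 1) = V 1" "g (V 2) = V 2"
proof -
  have v: "V 1 \<in> gamma_verts n" "V 2 \<in> gamma_verts n" using n3 by auto
  have "g (V 1) \<in> V ` {1..n}" "g (V 2) \<in> V ` {1..n}" using V_fwd v by auto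
  moreover have "gamma_adj n E (g (V 1)) (D 1)" using adjg[OF v(1), of "D 1"] fixD_from_B[of 1] by auto
  moreover have "gamma_adj n E (g (V 2)) (D 2)" using adjg[OF v(2), of "D 2"] fixD2 by auto
  ultimately show "g (V 1) = V 1" "g (V 2) = V 2" by auto
qed

lemma C_fwd: assumes "j \<in> {1..n}" shows "\<exists>k \<in> {1..n}. g (C j) = C k"
proof -
  have c: "C j \<in> gamma_verts n" using assms by auto
  have "gamma_adj n E (g (C j)) (D 1)" using adjg[OF c, of "D 1"] fixD_from_B[of 1] assms by auto
  moreover have "gamma_adj n E (g (C j)) (D 2)" using adjg[OF c, of "D 2"] fixD2 assms by auto
  moreover have "g (C j) \<in> gamma_verts n" using gin c .
  ultimately show ?thesis by (cases "g (C j)") auto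
qed

lemma fixC1: "g (C 1) = C 1"
proof -
  have c: "C 1 \<in> gamma_verts n" using n3 by auto
  obtain k where k: "k \<in> {1..n}" "g (C 1) = C k" using C_fwd[of 1] n3 by auto
  have v: "V 1 \<in> gamma_verts n" "V 2 \<in> gamma_verts n" using n3 by auto
  have "gamma_adj n E (g (C 1)) (V 1)" using adjg[OF c v(1)] fixV12 n3 by auto
  moreover have "gamma_adj n E (g (C 1)) (V 2)" using adjg[OF c v(2)] fixV12 n3 by auto
  ultimately show ?thesis using k n3 by (auto split: if_splits)
qed

lemma fixVC: "j \<in> {1..n} \<Longrightarrow> g (V j) = V j \<and> g (C j) = C j"
proof (induction j)
  case 0
  then show ?case by simp
next
  case (Suc j)
  show ?case
  proof (cases "j = 0")
    case True
    then show ?thesis using fixV12 fixC1 by simp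
  next
    case False
    then have j: "j \<in> {1..n}" "j < n" using Suc.prems by auto
    with Suc.IH have ih: "g (V j) = V j" "g (C j) = C j" by auto
    have cj: "C j \<in> gamma_verts n" "V j \<in> gamma_verts n" using j by auto
    have vs: "V (Suc j) \<in> gamma_verts n" "C (Suc j) \<in> gamma_verts n" using Suc.prems by auto
    obtain k where k: "k \<in> {1..n}" "g (V (Suc j)) = V k" using V_fwd[of "V (Suc j)"] Suc.prems by auto
    have "k \<noteq> j" using injeq[OF vs(1) cj(2)] ih k by auto
    moreover have "gamma_adj n E (V k) (C j)" using adjg[OF vs(1) cj(1)] ih k j by auto
    ultimately have gv: "g (V (Suc j)) = V (Suc j)" using k j by (auto split: if_splits)
    obtain m where m: "m \<in> {1..n}" "g (C (Suc j)) = C m" using C_fwd[of "Suc j"] Suc.prems by auto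
    have "m \<noteq> j" using injeq[OF vs(2) cj(1)] ih m by auto
    moreover have "gamma_adj n E (C m) (V (Suc j))" using adjg[OF vs(2) vs(1)] gv m Suc.prems by auto
    ultimately have "g (C (Suc j)) = C (Suc j)" using m j by (auto split: if_splits)
    with gv show ?thesis by simp
  qed
qed

lemma all_fixed: assumes "x \<in> gamma_verts n" shows "g x = x"
proof (cases x)
  case (V k) then show ?thesis using fixVC[of k] \<open>x \<in> gamma_verts n\<close> by auto
next
  case (C k) then show ?thesis using fixVC[of k] \<open>x \<in> gamma_verts n\<close> by auto
next
  case (A k)
  then have "k = 1 \<or> k = 2 \<or> k = 3" using \<open>x \<in> gamma_verts n\<close> by auto
  then show ?thesis using A fixA_from_B[of 1] fixA_from_B[of 2] fixA_from_B[of 3] fixB1 fixB2 fixB3 by auto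
next
  case (B k)
  then have "k = 1 \<or> k = 2 \<or> k = 3" using \<open>x \<in> gamma_verts n\<close> by auto
  then show ?thesis using B fixB1 fixB2 fixB3 by auto
next
  case (D k)
  then have "k = 1 \<or> k = 2 \<or> k = 3" using \<open>x \<in> gamma_verts n\<close> by auto
  then show ?thesis using D fixD_from_B[of 1] fixD_from_B[of 3] fixD2 by auto
qed

end

theorem lemma3p8:
  fixes n :: nat and E :: "nat \<Rightarrow> nat \<Rightarrow> bool" and f :: "gv \<Rightarrow> gv"
  assumes "n \<ge> 3"
    and "\<And>i j. i \<in> {1..n} \<Longrightarrow> j \<in> {1..n} \<Longrightarrow> E i j \<Longrightarrow> E j i"
    and "\<And>i. i \<in> {1..n} \<Longrightarrow> \<not> E i i"
    and "graph_automorphism (gamma_verts n) (gamma_adj n E) f"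
  shows "\<forall>x\<in>gamma_verts n. f x = x"
proof -
  interpret autg n E f using assms(1,4) by (simp add: autg_def)
  show ?thesis using all_fixed by blast
qed

end
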